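(* Let $K$ be a field and $m,n,r$ positive integers. Let $R=K[x_{ij}^k \mid 1\le i\le m,\ 1\le j\le n,\ 1\le k\le r]$ and let $I_{mn}^r\subseteq R$ be the ideal generated by all $2$-minors of the horizontal concatenation $H=(X_1\ \cdots\ X_r)$ and all $2$-minors of the vertical concatenation $V$ (the $X_k$ stacked on top of each other) of the matrices $X_k=(x_{ij}^k)_{1\le i\le m,1\le j\le n}$. Let $P_{mnr}$ be the poset which is the disjoint union of three pairwise incomparable chains $A_1,A_2,A_3$ with $|A_1|=m-1$, $|A_2|=n-1$, $|A_3|=r-1$, and let $L_{mnr}=\mathcal J(P_{mnr})$ be the distributive lattice of order ideals (downward closed subsets) of $P_{mnr}$, ordered by inclusion. Then $R/I_{mn}^r\cong K[L_{mnr}]$.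
   Context: For a finite lattice $L$, the Hibi ring is $K[L]=K[x_u\mid u\in L]/(x_{u_1}x_{u_2}-x_{u_1\wedge u_2}x_{u_1\vee u_2}\mid u_1,u_2\in L)$. In $\mathcal J(P)$ the meet is intersection and the join is union. *)

theory Defs
  imports "HOL-Library.Poly_Mapping" "HOL-Algebra.QuotRing"
begin

text \<open>Polynomials over a commutative ring 'k in variables of type 'v are finitely
  supported maps from monomials (finitely supported exponent vectors) to coefficients.\<close>

definition polys_in :: "'v set \<Rightarrow> (('v \<Rightarrow>\<^sub>0 nat) \<Rightarrow>\<^sub>0 'k::comm_ring_1) set" where
  "polys_in V = {p. \<forall>mon \<in> Poly_Mapping.keys p. Poly_Mapping.keys mon \<subseteq> V}"

definition poly_ring :: "'v set \<Rightarrow> (('v \<Rightarrow>\<^sub>0 nat) \<Rightarrow>\<^sub>0 'k::comm_ring_1) ring" where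
  "poly_ring V = \<lparr>carrier = polys_in V, monoid.mult = (*), one = 1, zero = 0, add = (+)\<rparr>"

definition pvar :: "'v \<Rightarrow> ('v \<Rightarrow>\<^sub>0 nat) \<Rightarrow>\<^sub>0 'k::comm_ring_1" where
  "pvar v = Poly_Mapping.single (Poly_Mapping.single v 1) 1"

definition pconst :: "'k::comm_ring_1 \<Rightarrow> ('v \<Rightarrow>\<^sub>0 nat) \<Rightarrow>\<^sub>0 'k" where
  "pconst c = Poly_Mapping.single 0 c"

definition kalg_iso_quot ::
  "'v set \<Rightarrow> (('v \<Rightarrow>\<^sub>0 nat) \<Rightarrow>\<^sub>0 'k::comm_ring_1) set \<Rightarrow>
   'w set \<Rightarrow> (('w \<Rightarrow>\<^sub>0 nat) \<Rightarrow>\<^sub>0 'k) set \<Rightarrow> bool" where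
  "kalg_iso_quot V I W J =
    (\<exists>h \<in> ring_iso (poly_ring V Quot I) (poly_ring W Quot J).
       \<forall>c. h (I +>\<^bsub>poly_ring V\<^esub> pconst c) = J +>\<^bsub>poly_ring W\<^esub> pconst c)"

text \<open>Variables x_{ij}^k, 0-indexed: (i,j,k) with i<m, j<n, k<r.\<close>

definition gen_vars :: "nat \<Rightarrow> nat \<Rightarrow> nat \<Rightarrow> (nat \<times> nat \<times> nat) set" where
  "gen_vars m n r = {(i,j,k). i < m \<and> j < n \<and> k < r}"

text \<open>2-minors of H = (X_1 ... X_r) (m x nr; column of x_{ij}^k is k*n+j) and of the
  vertical concatenation V (mr x n; row of x_{ij}^k is k*m+i).\<close>

definition minors_H :: "nat \<Rightarrow> nat \<Rightarrow> nat \<Rightarrow> ((nat \<times> nat \<times> nat \<Rightarrow>\<^sub>0 nat) \<Rightarrow>\<^sub>0 'k::comm_ring_1) set" where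
  "minors_H m n r = {pvar (i,j,k) * pvar (i',j',k') - pvar (i,j',k') * pvar (i',j,k) | i i' j j' k k'.
     i < i' \<and> i' < m \<and> j < n \<and> j' < n \<and> k < r \<and> k' < r \<and> k*n + j < k'*n + j'}"

definition minors_V :: "nat \<Rightarrow> nat \<Rightarrow> nat \<Rightarrow> ((nat \<times> nat \<times> nat \<Rightarrow>\<^sub>0 nat) \<Rightarrow>\<^sub>0 'k::comm_ring_1) set" where
  "minors_V m n r = {pvar (i,j,k) * pvar (i',j',k') - pvar (i,j',k) * pvar (i',j,k') | i i' j j' k k'.
     i < m \<and> i' < m \<and> j < j' \<and> j' < n \<and> k < r \<and> k' < r \<and> k*m + i < k'*m + i'}"

definition I_mnr :: "nat \<Rightarrow> nat \<Rightarrow> nat \<Rightarrow> ((nat \<times> nat \<times> nat \<Rightarrow>\<^sub>0 nat) \<Rightarrow>\<^sub>0 'k::comm_ring_1) set" where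
  "I_mnr m n r = genideal (poly_ring (gen_vars m n r)) (minors_H m n r \<union> minors_V m n r)"

definition order_ideals :: "'a set \<Rightarrow> ('a \<Rightarrow> 'a \<Rightarrow> bool) \<Rightarrow> 'a set set" where
  "order_ideals P leq = {I. I \<subseteq> P \<and> (\<forall>x\<in>I. \<forall>y\<in>P. leq y x \<longrightarrow> y \<in> I)}"

text \<open>P_{mnr}: disjoint union of three incomparable chains A_0, A_1, A_2 of sizes
  m-1, n-1, r-1; element (c,t) is the t-th element of chain c.\<close>

definition P_mnr :: "nat \<Rightarrow> nat \<Rightarrow> nat \<Rightarrow> (nat \<times> nat) set" where
  "P_mnr m n r = {(c,t). (c = 0 \<and> t < m - 1) \<or> (c = 1 \<and> t < n - 1) \<or> (c = 2 \<and> t < r - 1)}"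

definition P_le :: "nat \<times> nat \<Rightarrow> nat \<times> nat \<Rightarrow> bool" where
  "P_le x y = (fst x = fst y \<and> snd x \<le> snd y)"

definition L_mnr :: "nat \<Rightarrow> nat \<Rightarrow> nat \<Rightarrow> (nat \<times> nat) set set" where
  "L_mnr m n r = order_ideals (P_mnr m n r) P_le"

text \<open>Hibi ideal of a finite lattice L with meet and join; K[L] = K[x_u | u in L] / hibi_ideal.\<close>

definition hibi_ideal :: "'u set \<Rightarrow> ('u \<Rightarrow> 'u \<Rightarrow> 'u) \<Rightarrow> ('u \<Rightarrow> 'u \<Rightarrow> 'u) \<Rightarrow>
    (('u \<Rightarrow>\<^sub>0 nat) \<Rightarrow>\<^sub>0 'k::comm_ring_1) set" where
  "hibi_ideal L mt jn = genideal (poly_ring L)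
     {pvar u1 * pvar u2 - pvar (mt u1 u2) * pvar (jn u1 u2) | u1 u2. u1 \<in> L \<and> u2 \<in> L}"

end

theory Submission
  imports Defs
begin


definition lin :: "('a \<Rightarrow> 'b::zero \<Rightarrow> 'c::comm_monoid_add) \<Rightarrow> ('a \<Rightarrow>\<^sub>0 'b) \<Rightarrow> 'c" where
  "lin g p = (\<Sum>k\<in>Poly_Mapping.keys p. g k (Poly_Mapping.lookup p k))"

lemma lin_superset:
  assumes "finite S" "Poly_Mapping.keys p \<subseteq> S" "\<And>k. g k 0 = 0"
  shows "lin g p = (\<Sum>k\<in>S. g k (Poly_Mapping.lookup p k))"
  unfolding lin_def using assms
  by (intro sum.mono_neutral_left) (auto simp: in_keys_iff)

lemma lin_add:
  assumes "\<And>k. g k 0 = 0" "\<And>k a b. g k (a + b) = g k a + g k b"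
  shows "lin g (p + q) = lin g p + lin g q"
  unfolding lin_def by (rule setsum_keys_plus_distrib) (use assms in auto)

lemma lin_zero [simp]: "lin g 0 = 0"
  by (simp add: lin_def)

lemma lin_single:
  assumes "\<And>k. g k 0 = 0"
  shows "lin g (Poly_Mapping.single k v) = g k v"
  using assms by (simp add: lin_def)

lemma lin_sum:
  assumes "\<And>k. g k 0 = 0" "\<And>k a b. g k (a + b) = g k a + g k b"
  shows "lin g (sum P A) = (\<Sum>i\<in>A. lin g (P i))"
  by (induction A rule: infinite_finite_induct) (simp_all add: lin_add[OF assms])

lemma pm_expand: "p = (\<Sum>k\<in>Poly_Mapping.keys p. Poly_Mapping.single k (Poly_Mapping.lookup p k))"
proof (rule poly_mapping_eqI)
  fix x
  show "Poly_Mapping.lookup p x = Poly_Mapping.lookup (\<Sum>k\<in>Poly_Mapping.keys p. Poly_Mapping.single k (Poly_Mapping.lookup p k)) x"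
    by (simp add: lookup_sum lookup_single when_def in_keys_iff)
qed

definition mmap :: "('v \<Rightarrow> 'w) \<Rightarrow> ('v \<Rightarrow>\<^sub>0 nat) \<Rightarrow> ('w \<Rightarrow>\<^sub>0 nat)" where
  "mmap f = lin (\<lambda>v n. Poly_Mapping.single (f v) n)"

lemma mmap_add: "mmap f (a + b) = mmap f a + mmap f b"
  unfolding mmap_def by (rule lin_add) (simp_all add: single_add)

lemma mmap_zero [simp]: "mmap f 0 = 0"
  by (simp add: mmap_def)

lemma mmap_single: "mmap f (Poly_Mapping.single v n) = Poly_Mapping.single (f v) n"
  unfolding mmap_def by (rule lin_single) simp

lemma keys_sum_sub: "Poly_Mapping.keys (sum P A) \<subseteq> (\<Union>i\<in>A. Poly_Mapping.keys (P i))"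
proof (induction A rule: infinite_finite_induct)
  case (insert x F)
  then show ?case using keys_add[of "P x" "sum P F"] by auto
qed auto

lemma keys_mmap: "Poly_Mapping.keys (mmap f a) \<subseteq> f ` Poly_Mapping.keys a"
  unfolding mmap_def lin_def by (rule order_trans[OF keys_sum_sub]) auto

definition pmap :: "('v \<Rightarrow> 'w) \<Rightarrow> (('v \<Rightarrow>\<^sub>0 nat) \<Rightarrow>\<^sub>0 'k::comm_ring_1) \<Rightarrow> (('w \<Rightarrow>\<^sub>0 nat) \<Rightarrow>\<^sub>0 'k)" where
  "pmap f = lin (\<lambda>a c. Poly_Mapping.single (mmap f a) c)"

lemma pmap_add: "pmap f (p + q) = pmap f p + pmap f q"
  unfolding pmap_def by (rule lin_add) (simp_all add: single_add)

lemma pmap_single: "pmap f (Poly_Mapping.single a c) = Poly_Mapping.single (mmap f a) c"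
  unfolding pmap_def by (rule lin_single) simp

lemma pmap_sum: "pmap f (sum P A) = (\<Sum>i\<in>A. pmap f (P i))"
  unfolding pmap_def by (rule lin_sum) (simp_all add: single_add)

lemma pmap_one: "pmap f 1 = 1"
  using pmap_single[of f 0 1] by simp

lemma mult_expand:
  "p * q = (\<Sum>a\<in>Poly_Mapping.keys p. \<Sum>b\<in>Poly_Mapping.keys q.
      Poly_Mapping.single (a + b) (Poly_Mapping.lookup p a * Poly_Mapping.lookup q b))"
proof -
  have "p * q = (\<Sum>a\<in>Poly_Mapping.keys p. Poly_Mapping.single a (Poly_Mapping.lookup p a)) *
                (\<Sum>b\<in>Poly_Mapping.keys q. Poly_Mapping.single b (Poly_Mapping.lookup q b))"
    using pm_expand[of p] pm_expand[of q] by simp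
  also have "\<dots> = (\<Sum>a\<in>Poly_Mapping.keys p. \<Sum>b\<in>Poly_Mapping.keys q.
      Poly_Mapping.single (a + b) (Poly_Mapping.lookup p a * Poly_Mapping.lookup q b))"
    by (simp add: sum_product mult_single)
  finally show ?thesis .
qed

lemma pmap_mult: "pmap f (p * q) = pmap f p * pmap f q"
proof -
  have "pmap f (p * q) = (\<Sum>a\<in>Poly_Mapping.keys p. \<Sum>b\<in>Poly_Mapping.keys q.
      Poly_Mapping.single (mmap f a + mmap f b) (Poly_Mapping.lookup p a * Poly_Mapping.lookup q b))"
    by (subst mult_expand) (simp add: pmap_sum pmap_single mmap_add)
  also have "\<dots> = (\<Sum>a\<in>Poly_Mapping.keys p. Poly_Mapping.single (mmap f a) (Poly_Mapping.lookup p a)) *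
                (\<Sum>b\<in>Poly_Mapping.keys q. Poly_Mapping.single (mmap f b) (Poly_Mapping.lookup q b))"
    by (simp add: sum_product mult_single)
  also have "\<dots> = pmap f p * pmap f q"
    by (simp add: pmap_def lin_def)
  finally show ?thesis .
qed

lemma pmap_minus:
  fixes p q :: "('v \<Rightarrow>\<^sub>0 nat) \<Rightarrow>\<^sub>0 'k::comm_ring_1"
  shows "pmap f (p - q) = pmap f p - pmap f q"
proof -
  have "pmap f (- 1 :: ('v \<Rightarrow>\<^sub>0 nat) \<Rightarrow>\<^sub>0 'k) = - 1"
    using pmap_single[of f 0 "-1"] by (simp add: single_uminus)
  then have m1: "pmap f (- 1) * pmap f q = - pmap f q" by simp
  have "pmap f (p - q) = pmap f (p + (-1) * q)" by simp
  also have "\<dots> = pmap f p + pmap f (-1) * pmap f q" by (simp only: pmap_add pmap_mult)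
  also have "\<dots> = pmap f p - pmap f q" by (simp only: m1) simp
  finally show ?thesis .
qed

lemma pmap_pvar: "pmap f (pvar v) = pvar (f v)"
  by (simp add: pvar_def pmap_single mmap_single)

lemma pmap_pconst: "pmap f (pconst c) = pconst c"
  by (simp add: pconst_def pmap_single)

lemma keys_pmap: "Poly_Mapping.keys (pmap f p) \<subseteq> mmap f ` Poly_Mapping.keys p"
  unfolding pmap_def lin_def by (rule order_trans[OF keys_sum_sub]) auto

lemma mmap_inv:
  assumes "\<And>v. v \<in> Poly_Mapping.keys a \<Longrightarrow> g (f v) = v"
  shows "mmap g (mmap f a) = a"
proof -
  have "mmap g (mmap f a) = (\<Sum>v\<in>Poly_Mapping.keys a. mmap g (Poly_Mapping.single (f v) (Poly_Mapping.lookup a v)))"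
    unfolding mmap_def[of f] lin_def by (simp add: mmap_def lin_sum single_add)
  also have "\<dots> = (\<Sum>v\<in>Poly_Mapping.keys a. Poly_Mapping.single v (Poly_Mapping.lookup a v))"
    by (rule sum.cong) (simp_all add: mmap_single assms)
  also have "\<dots> = a" using pm_expand[of a] by simp
  finally show ?thesis .
qed

lemma pmap_inv:
  assumes "\<And>a v. a \<in> Poly_Mapping.keys p \<Longrightarrow> v \<in> Poly_Mapping.keys a \<Longrightarrow> g (f v) = v"
  shows "pmap g (pmap f p) = p"
proof -
  have "pmap g (pmap f p) = (\<Sum>a\<in>Poly_Mapping.keys p. pmap g (Poly_Mapping.single (mmap f a) (Poly_Mapping.lookup p a)))"
    unfolding pmap_def[of f] lin_def by (simp add: pmap_sum)
  also have "\<dots> = (\<Sum>a\<in>Poly_Mapping.keys p. Poly_Mapping.single a (Poly_Mapping.lookup p a))"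
    by (rule sum.cong) (simp_all add: pmap_single mmap_inv assms)
  also have "\<dots> = p" using pm_expand[of p] by simp
  finally show ?thesis .
qed



lemma polys_in_iff: "p \<in> polys_in V \<longleftrightarrow> (\<forall>mon\<in>Poly_Mapping.keys p. Poly_Mapping.keys mon \<subseteq> V)"
  by (simp add: polys_in_def)

lemma polys_in_add: "p \<in> polys_in V \<Longrightarrow> q \<in> polys_in V \<Longrightarrow> p + q \<in> polys_in V"
  unfolding polys_in_iff using keys_add[of p q] by blast

lemma keys_uminus_pm: "Poly_Mapping.keys (- p) = Poly_Mapping.keys (p :: 'a \<Rightarrow>\<^sub>0 'b::ab_group_add)"
  by (auto simp: in_keys_iff)

lemma polys_in_uminus: "p \<in> polys_in V \<Longrightarrow> - p \<in> polys_in V"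
  unfolding polys_in_iff keys_uminus_pm by blast

lemma polys_in_diff: "p \<in> polys_in V \<Longrightarrow> q \<in> polys_in V \<Longrightarrow> p - q \<in> polys_in V"
  using polys_in_add[OF _ polys_in_uminus, of p V q] by simp

lemma polys_in_mult: "p \<in> polys_in V \<Longrightarrow> q \<in> polys_in V \<Longrightarrow> p * q \<in> polys_in V"
proof -
  assume p: "p \<in> polys_in V" and q: "q \<in> polys_in V"
  show ?thesis unfolding polys_in_iff
  proof
    fix mon assume "mon \<in> Poly_Mapping.keys (p * q)"
    then obtain a b where ab: "mon = a + b" "a \<in> Poly_Mapping.keys p" "b \<in> Poly_Mapping.keys q"
      using keys_mult[of p q] by blast
    then show "Poly_Mapping.keys mon \<subseteq> V"
      using keys_add[of a b] p q unfolding polys_in_iff by blast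
  qed
qed

lemma polys_in_zero: "0 \<in> polys_in V"
  by (simp add: polys_in_def)

lemma polys_in_one: "1 \<in> polys_in V"
  by (simp add: polys_in_def)

lemma polys_in_pconst: "pconst c \<in> polys_in V"
  by (simp add: polys_in_def pconst_def)

lemma polys_in_pvar: "v \<in> V \<Longrightarrow> pvar v \<in> polys_in V"
  by (simp add: polys_in_def pvar_def)

lemma poly_ring_simps [simp]:
  "carrier (poly_ring V) = polys_in V"
  "mult (poly_ring V) = (*)"
  "one (poly_ring V) = 1"
  "zero (poly_ring V) = 0"
  "add (poly_ring V) = (+)"
  by (simp_all add: poly_ring_def)

lemma poly_ring_cring: "cring (poly_ring V :: (('v \<Rightarrow>\<^sub>0 nat) \<Rightarrow>\<^sub>0 'k::comm_ring_1) ring)"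
proof -
  have "\<exists>y\<in>polys_in V. y + x = 0 \<and> x + y = 0" if "x \<in> polys_in V" for x :: "('v \<Rightarrow>\<^sub>0 nat) \<Rightarrow>\<^sub>0 'k"
    by (rule bexI[of _ "- x"]) (simp_all add: polys_in_uminus that)
  then show ?thesis
    by unfold_locales (auto simp: Units_def algebra_simps polys_in_add polys_in_mult polys_in_zero polys_in_one)
qed



lemma quot_iso_gen:
  assumes R: "ring R" and S: "ring S" and h: "h \<in> ring_hom R S"
    and J: "ideal J S" and surj: "h ` carrier R = carrier S"
    and Isub: "I \<subseteq> carrier R" and ker: "\<And>p. p \<in> carrier R \<Longrightarrow> h p \<in> J \<longleftrightarrow> p \<in> I"
  shows "(\<lambda>X. the_elem ((\<lambda>p. J +>\<^bsub>S\<^esub> h p) ` X)) \<in> ring_iso (R Quot I) (S Quot J)"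
    and "\<And>x. x \<in> carrier R \<Longrightarrow> the_elem ((\<lambda>p. J +>\<^bsub>S\<^esub> h p) ` (I +>\<^bsub>R\<^esub> x)) = J +>\<^bsub>S\<^esub> h x"
proof -
  let ?H = "\<lambda>p. J +>\<^bsub>S\<^esub> h p"
  have H: "?H \<in> ring_hom R (S Quot J)"
    using ring_hom_trans[OF h ideal.rcos_ring_hom[OF J]] by (simp add: o_def)
  interpret HR: ring_hom_ring R "S Quot J" ?H
    by (rule ring_hom_ringI2[OF R ideal.quotient_is_ring[OF J] H])
  interpret Jid: ideal J S by (rule J)
  have kerI: "a_kernel R (S Quot J) ?H = I"
  proof -
    have "?H p = J \<longleftrightarrow> h p \<in> J" if "p \<in> carrier R" for p
    proof
      assume "?H p = J"
      moreover have "h p \<in> ?H p"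
        using Jid.a_rcos_self[of "h p"] ring_hom_closed[OF h that] by simp
      ultimately show "h p \<in> J" by simp
    next
      assume "h p \<in> J" then show "?H p = J" by (rule Jid.a_rcos_const)
    qed
    moreover have "I \<subseteq> carrier R" by (rule Isub)
    ultimately show ?thesis
      unfolding a_kernel_def' by (auto simp: FactRing_def ker)
  qed
  have surjH: "?H ` carrier R = carrier (S Quot J)"
    unfolding FactRing_def A_RCOSETS_def' using surj by (auto simp: image_iff) (metis image_iff)
  show "(\<lambda>X. the_elem (?H ` X)) \<in> ring_iso (R Quot I) (S Quot J)"
    using HR.FactRing_iso_set[OF surjH] kerI by simp
  show "the_elem (?H ` (I +>\<^bsub>R\<^esub> x)) = ?H x" if "x \<in> carrier R" for x
    using HR.the_elem_simp[OF that] kerI by simp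
qed



lemma pmap_polys_in:
  assumes "f ` V \<subseteq> W" "p \<in> polys_in V"
  shows "pmap f p \<in> polys_in W"
  unfolding polys_in_iff
proof
  fix mon assume "mon \<in> Poly_Mapping.keys (pmap f p)"
  then obtain a where a: "a \<in> Poly_Mapping.keys p" "mon = mmap f a" using keys_pmap by blast
  then show "Poly_Mapping.keys mon \<subseteq> W"
    using keys_mmap[of f a] assms unfolding polys_in_iff by blast
qed

lemma pmap_hom:
  assumes "f ` V \<subseteq> W"
  shows "pmap f \<in> ring_hom (poly_ring V :: (('v \<Rightarrow>\<^sub>0 nat) \<Rightarrow>\<^sub>0 'k::comm_ring_1) ring) (poly_ring W)"
  by (rule ring_hom_memI) (auto simp: pmap_polys_in[OF assms] pmap_add pmap_mult pmap_one)

lemma genideal_image: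
  assumes R: "ring R" and S: "ring S" and h: "h \<in> ring_hom R S"
    and X: "X \<subseteq> carrier R" and J: "ideal J S" and hX: "h ` X \<subseteq> J"
    and p: "p \<in> genideal R X"
  shows "h p \<in> J"
proof -
  interpret HR: ring_hom_ring R S h by (rule ring_hom_ringI2[OF R S h])
  have "genideal R X \<subseteq> {r \<in> carrier R. h r \<in> J}"
    using ring.genideal_minimal[OF R HR.ideal_vimage[OF J]] X hX by blast
  then show ?thesis using p by blast
qed

lemma ideal_add: "ideal I (poly_ring V) \<Longrightarrow> a \<in> I \<Longrightarrow> b \<in> I \<Longrightarrow> a + b \<in> I"
  using additive_subgroup.a_closed[OF ideal.axioms(1)] by fastforce

lemma ideal_multc: "ideal I (poly_ring V) \<Longrightarrow> c \<in> polys_in V \<Longrightarrow> a \<in> I \<Longrightarrow> c * a \<in> I"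
  using ideal.I_l_closed by fastforce

lemma ideal_zero: "ideal I (poly_ring V) \<Longrightarrow> 0 \<in> I"
  using additive_subgroup.zero_closed[OF ideal.axioms(1)] by fastforce

lemma ideal_neg:
  fixes a :: "('v \<Rightarrow>\<^sub>0 nat) \<Rightarrow>\<^sub>0 'k::comm_ring_1"
  shows "ideal I (poly_ring V) \<Longrightarrow> a \<in> I \<Longrightarrow> - a \<in> I"
proof -
  assume "ideal I (poly_ring V)" "a \<in> I"
  moreover have "(-1 :: ('v \<Rightarrow>\<^sub>0 nat) \<Rightarrow>\<^sub>0 'k) \<in> polys_in V" by (rule polys_in_uminus[OF polys_in_one])
  ultimately show ?thesis using ideal_multc[of I V "-1" a] by simp
qed

lemma ideal_sub:
  fixes a :: "('v \<Rightarrow>\<^sub>0 nat) \<Rightarrow>\<^sub>0 'k::comm_ring_1"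
  shows "ideal I (poly_ring V) \<Longrightarrow> a \<in> I \<Longrightarrow> b \<in> I \<Longrightarrow> a - b \<in> I"
proof -
  assume "ideal I (poly_ring V)" "a \<in> I" "b \<in> I"
  then show ?thesis using ideal_add[of I V a "- b"] ideal_neg[of I V b] by simp
qed



definition bin :: "'v \<Rightarrow> 'v \<Rightarrow> 'v \<Rightarrow> 'v \<Rightarrow> ('v \<Rightarrow>\<^sub>0 nat) \<Rightarrow>\<^sub>0 'k::comm_ring_1" where
  "bin a b c d = pvar a * pvar b - pvar c * pvar d"

lemma bin_comm1: "bin a b c d = bin b a c d"
  by (simp add: bin_def mult.commute)
lemma bin_comm2: "bin a b c d = bin a b d c"
  by (simp add: bin_def mult.commute)
lemma bin_neg: "bin c d a b = - bin a b c d"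
  by (simp add: bin_def)
lemma bin_trans: "bin a b e f = bin a b c d + bin c d e f"
  by (simp add: bin_def)
lemma bin_refl: "bin a b a b = 0"
  by (simp add: bin_def)

abbreviation GV where "GV m n r \<equiv> gen_vars m n r"

lemma gens_sub: "minors_H m n r \<union> minors_V m n r \<subseteq> polys_in (gen_vars m n r)"
  unfolding minors_H_def minors_V_def
  by (auto intro!: polys_in_diff polys_in_mult polys_in_pvar simp: gen_vars_def)

lemma I_ideal: "ideal (I_mnr m n r :: ((nat \<times> nat \<times> nat \<Rightarrow>\<^sub>0 nat) \<Rightarrow>\<^sub>0 'k::comm_ring_1) set) (poly_ring (gen_vars m n r))"
  unfolding I_mnr_def
  apply (rule ring.genideal_ideal[OF cring.axioms(1)[OF poly_ring_cring]])
  apply (subst poly_ring_simps)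
  apply (rule gens_sub)
  done

lemma gens_in_I: "minors_H m n r \<union> minors_V m n r \<subseteq> (I_mnr m n r :: ((nat \<times> nat \<times> nat \<Rightarrow>\<^sub>0 nat) \<Rightarrow>\<^sub>0 'k::comm_ring_1) set)"
  unfolding I_mnr_def
  apply (rule ring.genideal_self[OF cring.axioms(1)[OF poly_ring_cring]])
  apply (subst poly_ring_simps)
  apply (rule gens_sub)
  done

lemma lin_eq:
  fixes j j' k k' n :: nat
  assumes "k * n + j = k' * n + j'" "j < n" "j' < n"
  shows "j = j' \<and> k = k'"
proof -
  have "(k * n + j) mod n = (k' * n + j') mod n" using assms(1) by simp
  then have jj: "j = j'" using assms(2,3) by simp
  then have "k * n = k' * n" using assms by simp
  then show ?thesis using jj assms by simp
qed

type_synonym 'k tpoly = "(nat \<times> nat \<times> nat \<Rightarrow>\<^sub>0 nat) \<Rightarrow>\<^sub>0 'k"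

abbreviation II :: "nat \<Rightarrow> nat \<Rightarrow> nat \<Rightarrow> ((nat \<times> nat \<times> nat \<Rightarrow>\<^sub>0 nat) \<Rightarrow>\<^sub>0 'k::comm_ring_1) set" where
  "II m n r \<equiv> I_mnr m n r"

lemma II_neg: "x \<in> (II m n r :: 'k::comm_ring_1 tpoly set) \<Longrightarrow> - x \<in> (II m n r :: 'k tpoly set)"
  using ideal_neg[OF I_ideal] by blast

lemma II_add: "x \<in> (II m n r :: 'k::comm_ring_1 tpoly set) \<Longrightarrow> y \<in> (II m n r :: 'k tpoly set) \<Longrightarrow> x + y \<in> (II m n r :: 'k tpoly set)"
  using ideal_add[OF I_ideal] by blast

lemma II_zero: "0 \<in> (II m n r :: 'k::comm_ring_1 tpoly set)"
  using ideal_zero[OF I_ideal] by blast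

lemma bin_trans_I:
  assumes "bin a b c d \<in> (II m n r :: 'k::comm_ring_1 tpoly set)" "bin c d e f \<in> (II m n r :: 'k tpoly set)" shows "bin a b e f \<in> (II m n r :: 'k tpoly set)"
proof -
  have "bin a b c d + bin c d e f \<in> (II m n r :: 'k::comm_ring_1 tpoly set)" by (rule II_add[OF assms])
  then show ?thesis by (simp only: bin_trans[symmetric])
qed

lemma bin_sym_I:
  assumes "bin a b c d \<in> (II m n r :: 'k::comm_ring_1 tpoly set)" shows "bin c d a b \<in> (II m n r :: 'k tpoly set)"
proof -
  have "- bin a b c d \<in> (II m n r :: 'k::comm_ring_1 tpoly set)" by (rule II_neg[OF assms])
  then show ?thesis by (simp only: bin_neg[symmetric])
qed

lemma H_lt:
  assumes "i < i'" "i' < m" "j < n" "j' < n" "k < r" "k' < r"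
  shows "bin (i,j,k) (i',j',k') (i,j',k') (i',j,k) \<in> (II m n r :: 'k::comm_ring_1 tpoly set)"
proof -
  consider "k*n + j < k'*n + j'" | "k*n + j = k'*n + j'" | "k'*n + j' < k*n + j" by linarith
  then show ?thesis
  proof cases
    case 1
    then have "bin (i,j,k) (i',j',k') (i,j',k') (i',j,k) \<in> minors_H m n r"
      unfolding minors_H_def bin_def using assms by blast
    then show ?thesis using gens_in_I by blast
  next
    case 2
    then have "j = j' \<and> k = k'" using lin_eq assms by blast
    then show ?thesis using II_zero by (simp add: bin_refl)
  next
    case 3
    then have "bin (i,j',k') (i',j,k) (i,j,k) (i',j',k') \<in> minors_H m n r"
      unfolding minors_H_def bin_def using assms by blast
    then show ?thesis using gens_in_I bin_sym_I by blast
  qed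
qed

lemma H_any:
  assumes "i < m" "i' < m" "j < n" "j' < n" "k < r" "k' < r"
  shows "bin (i,j,k) (i',j',k') (i,j',k') (i',j,k) \<in> (II m n r :: 'k::comm_ring_1 tpoly set)"
proof -
  consider "i < i'" | "i = i'" | "i' < i" by linarith
  then show ?thesis
  proof cases
    case 1 then show ?thesis using H_lt assms by blast
  next
    case 2 then show ?thesis using II_zero by (simp add: bin_def mult.commute)
  next
    case 3
    then have "bin (i',j',k') (i,j,k) (i',j,k) (i,j',k') \<in> (II m n r :: 'k::comm_ring_1 tpoly set)" using H_lt assms by blast
    then show ?thesis by (metis bin_comm1 bin_comm2)
  qed
qed

lemma V_lt:
  assumes "j < j'" "j' < n" "i < m" "i' < m" "k < r" "k' < r"
  shows "bin (i,j,k) (i',j',k') (i,j',k) (i',j,k') \<in> (II m n r :: 'k::comm_ring_1 tpoly set)"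
proof -
  consider "k*m + i < k'*m + i'" | "k*m + i = k'*m + i'" | "k'*m + i' < k*m + i" by linarith
  then show ?thesis
  proof cases
    case 1
    then have "bin (i,j,k) (i',j',k') (i,j',k) (i',j,k') \<in> minors_V m n r"
      unfolding minors_V_def bin_def using assms by blast
    then show ?thesis using gens_in_I by blast
  next
    case 2
    then have "i = i' \<and> k = k'" using lin_eq assms by blast
    then show ?thesis using II_zero by (simp add: bin_def mult.commute)
  next
    case 3
    then have "bin (i',j,k') (i,j',k) (i',j',k') (i,j,k) \<in> minors_V m n r"
      unfolding minors_V_def bin_def using assms by blast
    then have "bin (i',j,k') (i,j',k) (i',j',k') (i,j,k) \<in> (II m n r :: 'k::comm_ring_1 tpoly set)" using gens_in_I by blast
    then have "bin (i',j',k') (i,j,k) (i',j,k') (i,j',k) \<in> (II m n r :: 'k::comm_ring_1 tpoly set)" using bin_sym_I by blast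
    then show ?thesis by (metis bin_comm1 bin_comm2)
  qed
qed

lemma V_any:
  assumes "i < m" "i' < m" "j < n" "j' < n" "k < r" "k' < r"
  shows "bin (i,j,k) (i',j',k') (i,j',k) (i',j,k') \<in> (II m n r :: 'k::comm_ring_1 tpoly set)"
proof -
  consider "j < j'" | "j = j'" | "j' < j" by linarith
  then show ?thesis
  proof cases
    case 1 then show ?thesis using V_lt assms by blast
  next
    case 2 then show ?thesis using II_zero by (simp add: bin_refl)
  next
    case 3
    then have "bin (i',j',k') (i,j,k) (i',j,k') (i,j',k) \<in> (II m n r :: 'k::comm_ring_1 tpoly set)" using V_lt assms by blast
    then show ?thesis by (metis bin_comm1 bin_comm2)
  qed
qed

lemma K_any:
  assumes "i < m" "i' < m" "j < n" "j' < n" "k < r" "k' < r"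
  shows "bin (i,j,k) (i',j',k') (i,j,k') (i',j',k) \<in> (II m n r :: 'k::comm_ring_1 tpoly set)"
proof -
  have "bin (i,j,k) (i',j',k') (i,j',k') (i',j,k) \<in> (II m n r :: 'k::comm_ring_1 tpoly set)" using H_any assms by blast
  moreover have "bin (i,j',k') (i',j,k) (i,j,k') (i',j',k) \<in> (II m n r :: 'k::comm_ring_1 tpoly set)" using V_any assms by blast
  ultimately show ?thesis using bin_trans_I by blast
qed

lemma hibi_le:
  assumes "i \<le> i'" "i < m" "i' < m" "j < n" "j' < n" "k < r" "k' < r"
  shows "bin (i,j,k) (i',j',k') (i, min j j', min k k') (i', max j j', max k k') \<in> (II m n r :: 'k::comm_ring_1 tpoly set)"
proof -
  have 1: "bin (i,j,k) (i',j',k') (i, min j j', k) (i', max j j', k') \<in> (II m n r :: 'k::comm_ring_1 tpoly set)"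
  proof (cases "j \<le> j'")
    case True then show ?thesis using II_zero by (simp add: bin_refl)
  next
    case False then show ?thesis using V_any[OF assms(2-7)] by (simp add: min_def max_def)
  qed
  have 2: "bin (i, min j j', k) (i', max j j', k') (i, min j j', min k k') (i', max j j', max k k') \<in> (II m n r :: 'k::comm_ring_1 tpoly set)"
  proof (cases "k \<le> k'")
    case True then show ?thesis using II_zero by (simp add: bin_refl)
  next
    case False
    have "bin (i, min j j', k) (i', max j j', k') (i, min j j', k') (i', max j j', k) \<in> (II m n r :: 'k::comm_ring_1 tpoly set)"
      by (rule K_any) (use assms in auto)
    moreover have "min k k' = k'" "max k k' = k" using False by auto
    ultimately show ?thesis by simp
  qed
  show ?thesis using bin_trans_I[OF 1 2] .
qed

lemma hibi_any:
  assumes "i < m" "i' < m" "j < n" "j' < n" "k < r" "k' < r"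
  shows "bin (i,j,k) (i',j',k') (min i i', min j j', min k k') (max i i', max j j', max k k') \<in> (II m n r :: 'k::comm_ring_1 tpoly set)"
proof (cases "i \<le> i'")
  case True then show ?thesis using hibi_le[OF True assms] by (simp add: min_def max_def)
next
  case False
  have h: "bin (i',j',k') (i,j,k) (i', min j' j, min k' k) (i, max j' j, max k' k) \<in> (II m n r :: 'k::comm_ring_1 tpoly set)"
    using hibi_le[of i' i] assms False by simp
  moreover have "min i i' = i'" "max i i' = i" using False by auto
  moreover have "min j' j = min j j'" "min k' k = min k k'" "max j' j = max j j'" "max k' k = max k k'"
    by (auto simp: min_def max_def)
  ultimately show ?thesis by (metis bin_comm1)
qed



definition fv :: "nat \<times> nat \<times> nat \<Rightarrow> (nat \<times> nat) set" where
  "fv x = (case x of (i,j,k) \<Rightarrow> {(c,t). (c = 0 \<and> t < i) \<or> (c = 1 \<and> t < j) \<or> (c = 2 \<and> t < k)})"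

definition gv :: "(nat \<times> nat) set \<Rightarrow> nat \<times> nat \<times> nat" where
  "gv S = (card {t. (0,t) \<in> S}, card {t. (1,t) \<in> S}, card {t. (2,t) \<in> S})"

lemma gv_fv: "gv (fv x) = x"
proof -
  obtain i j k where x: "x = (i,j,k)" by (cases x) auto
  have "{t. (0::nat,t) \<in> fv x} = {..<i}" "{t. (1::nat,t) \<in> fv x} = {..<j}" "{t. (2::nat,t) \<in> fv x} = {..<k}"
    by (auto simp: fv_def x)
  then show ?thesis by (simp add: gv_def x)
qed

lemma fv_inter: "fv (i,j,k) \<inter> fv (i',j',k') = fv (min i i', min j j', min k k')"
  by (auto simp: fv_def)

lemma fv_union: "fv (i,j,k) \<union> fv (i',j',k') = fv (max i i', max j j', max k k')"
  by (auto simp: fv_def)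

lemma down_nat:
  fixes D :: "nat set"
  assumes "finite D" "\<And>x y. x \<in> D \<Longrightarrow> y \<le> x \<Longrightarrow> y \<in> D"
  shows "D = {..<card D}"
proof (cases "D = {}")
  case True then show ?thesis by simp
next
  case False
  let ?M = "Max D"
  have "D = {..?M}"
    using assms(2) Max_ge[OF assms(1)] Max_in[OF assms(1) False] by blast
  also have "{..?M} = {..<Suc ?M}" by auto
  finally have e: "D = {..<Suc ?M}" .
  show ?thesis using e card_lessThan[of "Suc ?M"] by simp
qed

lemma L_mem: "S \<in> L_mnr m n r \<longleftrightarrow> S \<subseteq> P_mnr m n r \<and> (\<forall>x\<in>S. \<forall>y\<in>P_mnr m n r. P_le y x \<longrightarrow> y \<in> S)"
  by (simp add: L_mnr_def order_ideals_def)

lemma fv_in_L: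
  assumes x: "x \<in> gen_vars m n r" shows "fv x \<in> L_mnr m n r"
proof -
  obtain i j k where x': "x = (i,j,k)" "i < m" "j < n" "k < r" using x by (cases x) (auto simp: gen_vars_def)
  have mem: "(c,t) \<in> fv x \<longleftrightarrow> (c = 0 \<and> t < i) \<or> (c = 1 \<and> t < j) \<or> (c = 2 \<and> t < k)" for c t
    by (simp add: fv_def x')
  have "fv x \<subseteq> P_mnr m n r"
  proof
    fix y assume "y \<in> fv x"
    moreover obtain c t where "y = (c,t)" by (cases y) auto
    ultimately show "y \<in> P_mnr m n r" using mem[of c t] x' by (auto simp: P_mnr_def)
  qed
  moreover have "y \<in> fv x" if "z \<in> fv x" "P_le y z" for y z
  proof -
    obtain c t where z: "z = (c,t)" by (cases z) auto
    obtain c' t' where y: "y = (c',t')" by (cases y) auto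
    have "c' = c" "t' \<le> t" using that(2) by (auto simp: P_le_def y z)
    then show ?thesis using that(1) mem[of c t] mem[of c' t'] y z by auto
  qed
  ultimately show ?thesis unfolding L_mem by blast
qed

lemma chain_part:
  assumes S: "S \<in> L_mnr m n r" and cN: "\<And>t. (c,t) \<in> P_mnr m n r \<longleftrightarrow> t < N - 1"
  shows "{t. (c,t) \<in> S} = {..<card {t. (c,t) \<in> S}}" "card {t. (c,t) \<in> S} < N \<or> N = 0"
proof -
  have SP: "S \<subseteq> P_mnr m n r" and down: "\<And>x y. x \<in> S \<Longrightarrow> y \<in> P_mnr m n r \<Longrightarrow> P_le y x \<Longrightarrow> y \<in> S"
    using S unfolding L_mem by blast+
  have sub: "{t. (c,t) \<in> S} \<subseteq> {..<N - 1}"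
    using SP cN by blast
  then have fin: "finite {t. (c,t) \<in> S}" by (rule finite_subset) simp
  show "{t. (c,t) \<in> S} = {..<card {t. (c,t) \<in> S}}"
  proof (rule down_nat[OF fin])
    fix x y assume xy: "x \<in> {t. (c,t) \<in> S}" "y \<le> x"
    then have "x < N - 1" using sub by blast
    then have "(c,y) \<in> P_mnr m n r" using cN xy(2) by simp
    moreover have "P_le (c,y) (c,x)" using xy(2) by (simp add: P_le_def)
    ultimately show "y \<in> {t. (c,t) \<in> S}" using down xy(1) by blast
  qed
  have "card {t. (c,t) \<in> S} \<le> N - 1" using card_mono[OF _ sub] by simp
  then show "card {t. (c,t) \<in> S} < N \<or> N = 0" by linarith
qed

lemma cN0: "(0,t) \<in> P_mnr m n r \<longleftrightarrow> t < m - 1" by (simp add: P_mnr_def)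
lemma cN1: "(1,t) \<in> P_mnr m n r \<longleftrightarrow> t < n - 1" by (simp add: P_mnr_def)
lemma cN2: "(2,t) \<in> P_mnr m n r \<longleftrightarrow> t < r - 1" by (simp add: P_mnr_def)

lemma gv_in_V:
  assumes S: "S \<in> L_mnr m n r" "m \<ge> 1" "n \<ge> 1" "r \<ge> 1"
  shows "gv S \<in> gen_vars m n r"
proof -
  have "card {t. (0,t) \<in> S} < m" using chain_part(2)[OF S(1) cN0] S by linarith
  moreover have "card {t. (1,t) \<in> S} < n" using chain_part(2)[OF S(1) cN1] S by linarith
  moreover have "card {t. (2,t) \<in> S} < r" using chain_part(2)[OF S(1) cN2] S by linarith
  ultimately show ?thesis by (simp add: gv_def gen_vars_def)
qed

lemma fv_gv:
  assumes S: "S \<in> L_mnr m n r"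
  shows "fv (gv S) = S"
proof -
  have sub: "S \<subseteq> P_mnr m n r" using S L_mem by blast
  have e0: "{t. (0,t) \<in> S} = {..<card {t. (0,t) \<in> S}}" using chain_part(1)[OF S cN0] .
  have e1: "{t. (1,t) \<in> S} = {..<card {t. (1,t) \<in> S}}" using chain_part(1)[OF S cN1] .
  have e2: "{t. (2,t) \<in> S} = {..<card {t. (2,t) \<in> S}}" using chain_part(1)[OF S cN2] .
  show ?thesis
  proof (rule Set.set_eqI)
    fix x :: "nat \<times> nat"
    obtain c t where x: "x = (c,t)" by (cases x) auto
    have "x \<in> fv (gv S) \<longleftrightarrow> (c = 0 \<and> t < card {t. (0,t) \<in> S}) \<or> (c = 1 \<and> t < card {t. (1,t) \<in> S}) \<or> (c = 2 \<and> t < card {t. (2,t) \<in> S})"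
      by (simp add: fv_def gv_def x)
    also have "\<dots> \<longleftrightarrow> (c = 0 \<and> t \<in> {t. (0,t) \<in> S}) \<or> (c = 1 \<and> t \<in> {t. (1,t) \<in> S}) \<or> (c = 2 \<and> t \<in> {t. (2,t) \<in> S})"
      by (subst e0, subst e1, subst e2) (simp only: lessThan_iff)
    also have "\<dots> \<longleftrightarrow> x \<in> S"
    proof -
      have "x \<in> S \<Longrightarrow> c = 0 \<or> c = 1 \<or> c = 2" using sub x by (auto simp: P_mnr_def)
      then show ?thesis using x by auto
    qed
    finally show "x \<in> fv (gv S) \<longleftrightarrow> x \<in> S" .
  qed
qed

lemma L_inter: "u1 \<in> L_mnr m n r \<Longrightarrow> u2 \<in> L_mnr m n r \<Longrightarrow> u1 \<inter> u2 \<in> L_mnr m n r"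
  unfolding L_mem by blast

lemma L_union: "u1 \<in> L_mnr m n r \<Longrightarrow> u2 \<in> L_mnr m n r \<Longrightarrow> u1 \<union> u2 \<in> L_mnr m n r"
  unfolding L_mem by blast



type_synonym 'k wpoly = "((nat \<times> nat) set \<Rightarrow>\<^sub>0 nat) \<Rightarrow>\<^sub>0 'k"

lemma pmap_gen_H:
  fixes a b c d :: "nat \<times> nat \<times> nat"
  assumes "a \<in> gen_vars m n r" "b \<in> gen_vars m n r" "c \<in> gen_vars m n r" "d \<in> gen_vars m n r"
    and "fv a \<inter> fv b = fv c \<inter> fv d" "fv a \<union> fv b = fv c \<union> fv d"
  shows "pmap fv (pvar a * pvar b - pvar c * pvar d :: 'k::comm_ring_1 tpoly)
          \<in> (hibi_ideal (L_mnr m n r) (\<inter>) (\<union>) :: 'k wpoly set)"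
proof -
  let ?W = "L_mnr m n r"
  let ?G = "{pvar u1 * pvar u2 - pvar (u1 \<inter> u2) * pvar (u1 \<union> u2) | u1 u2. u1 \<in> ?W \<and> u2 \<in> ?W} :: 'k wpoly set"
  have Gsub: "?G \<subseteq> carrier (poly_ring ?W)"
  proof
    fix x assume "x \<in> ?G"
    then obtain u1 u2 where x: "x = pvar u1 * pvar u2 - pvar (u1 \<inter> u2) * pvar (u1 \<union> u2)" "u1 \<in> ?W" "u2 \<in> ?W"
      by blast
    show "x \<in> carrier (poly_ring ?W)"
      unfolding x(1) poly_ring_simps
      by (intro polys_in_diff polys_in_mult polys_in_pvar L_inter L_union x(2,3))
  qed
  have J: "ideal (hibi_ideal ?W (\<inter>) (\<union>) :: 'k wpoly set) (poly_ring ?W)"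
    unfolding hibi_ideal_def by (rule ring.genideal_ideal[OF cring.axioms(1)[OF poly_ring_cring] Gsub])
  have GJ: "?G \<subseteq> hibi_ideal ?W (\<inter>) (\<union>)"
    unfolding hibi_ideal_def by (rule ring.genideal_self[OF cring.axioms(1)[OF poly_ring_cring] Gsub])
  have W: "fv a \<in> ?W" "fv b \<in> ?W" "fv c \<in> ?W" "fv d \<in> ?W" using assms fv_in_L by blast+
  have h1: "pvar (fv a) * pvar (fv b) - pvar (fv a \<inter> fv b) * pvar (fv a \<union> fv b) \<in> (hibi_ideal ?W (\<inter>) (\<union>) :: 'k wpoly set)"
    by (rule subsetD[OF GJ]) (use W in blast)
  have h2: "pvar (fv c) * pvar (fv d) - pvar (fv c \<inter> fv d) * pvar (fv c \<union> fv d) \<in> (hibi_ideal ?W (\<inter>) (\<union>) :: 'k wpoly set)"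
    by (rule subsetD[OF GJ]) (use W in blast)
  have "(pvar (fv a) * pvar (fv b) - pvar (fv a \<inter> fv b) * pvar (fv a \<union> fv b))
      - (pvar (fv c) * pvar (fv d) - pvar (fv c \<inter> fv d) * pvar (fv c \<union> fv d)) \<in> (hibi_ideal ?W (\<inter>) (\<union>) :: 'k wpoly set)"
    by (rule ideal_sub[OF J h1 h2])
  moreover have "pmap fv (pvar a * pvar b - pvar c * pvar d :: 'k tpoly) =
     (pvar (fv a) * pvar (fv b) - pvar (fv a \<inter> fv b) * pvar (fv a \<union> fv b))
      - (pvar (fv c) * pvar (fv d) - pvar (fv c \<inter> fv d) * pvar (fv c \<union> fv d))"
    using assms(5,6) by (simp add: pmap_minus pmap_mult pmap_pvar)
  ultimately show ?thesis by simp
qed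



lemma pmap_gen_hibi:
  assumes u: "u1 \<in> L_mnr m n r" "u2 \<in> L_mnr m n r" and mnr: "m \<ge> 1" "n \<ge> 1" "r \<ge> 1"
  shows "pmap gv (pvar u1 * pvar u2 - pvar (u1 \<inter> u2) * pvar (u1 \<union> u2) :: 'k::comm_ring_1 wpoly)
          \<in> (II m n r :: 'k tpoly set)"
proof -
  obtain i j k where a: "gv u1 = (i,j,k)" by (cases "gv u1") auto
  obtain i' j' k' where b: "gv u2 = (i',j',k')" by (cases "gv u2") auto
  have ra: "(i,j,k) \<in> gen_vars m n r" using gv_in_V[OF u(1) mnr] a by simp
  have rb: "(i',j',k') \<in> gen_vars m n r" using gv_in_V[OF u(2) mnr] b by simp
  have u1: "u1 = fv (i,j,k)" using fv_gv[OF u(1)] a by simp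
  have u2: "u2 = fv (i',j',k')" using fv_gv[OF u(2)] b by simp
  have "pmap gv (pvar u1 * pvar u2 - pvar (u1 \<inter> u2) * pvar (u1 \<union> u2) :: 'k wpoly)
      = bin (i,j,k) (i',j',k') (min i i', min j j', min k k') (max i i', max j j', max k k')"
    by (simp add: pmap_minus pmap_mult pmap_pvar bin_def u1 u2 fv_inter fv_union gv_fv)
  moreover have "bin (i,j,k) (i',j',k') (min i i', min j j', min k k') (max i i', max j j', max k k') \<in> (II m n r :: 'k tpoly set)"
    by (rule hibi_any) (use ra rb in \<open>auto simp: gen_vars_def\<close>)
  ultimately show ?thesis by simp
qed



lemma hibi_gens_sub:
  "{pvar u1 * pvar u2 - pvar (u1 \<inter> u2) * pvar (u1 \<union> u2) | u1 u2. u1 \<in> L_mnr m n r \<and> u2 \<in> L_mnr m n r}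
     \<subseteq> carrier (poly_ring (L_mnr m n r) :: 'k::comm_ring_1 wpoly ring)"
proof
  fix x :: "'k wpoly" assume "x \<in> {pvar u1 * pvar u2 - pvar (u1 \<inter> u2) * pvar (u1 \<union> u2) | u1 u2. u1 \<in> L_mnr m n r \<and> u2 \<in> L_mnr m n r}"
  then obtain u1 u2 where x: "x = pvar u1 * pvar u2 - pvar (u1 \<inter> u2) * pvar (u1 \<union> u2)" "u1 \<in> L_mnr m n r" "u2 \<in> L_mnr m n r"
    by blast
  show "x \<in> carrier (poly_ring (L_mnr m n r) :: 'k wpoly ring)"
    unfolding x(1) poly_ring_simps
    by (intro polys_in_diff polys_in_mult polys_in_pvar L_inter L_union x(2,3))
qed

lemma J_ideal: "ideal (hibi_ideal (L_mnr m n r) (\<inter>) (\<union>) :: 'k::comm_ring_1 wpoly set) (poly_ring (L_mnr m n r))"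
  unfolding hibi_ideal_def by (rule ring.genideal_ideal[OF cring.axioms(1)[OF poly_ring_cring] hibi_gens_sub])

theorem corollary3p5:
  fixes m n r :: nat
  assumes "m \<ge> 1" and "n \<ge> 1" and "r \<ge> 1"
  shows "kalg_iso_quot (gen_vars m n r) (I_mnr m n r :: ((nat \<times> nat \<times> nat \<Rightarrow>\<^sub>0 nat) \<Rightarrow>\<^sub>0 'k::field) set)
           (L_mnr m n r) (hibi_ideal (L_mnr m n r) (\<inter>) (\<union>))"
proof -
  let ?V = "gen_vars m n r"
  let ?W = "L_mnr m n r"
  let ?R = "poly_ring ?V :: 'k tpoly ring"
  let ?S = "poly_ring ?W :: 'k wpoly ring"
  let ?I = "I_mnr m n r :: 'k tpoly set"
  let ?J = "hibi_ideal ?W (\<inter>) (\<union>) :: 'k wpoly set"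
  let ?GI = "minors_H m n r \<union> minors_V m n r :: 'k tpoly set"
  let ?GJ = "{pvar u1 * pvar u2 - pvar (u1 \<inter> u2) * pvar (u1 \<union> u2) | u1 u2. u1 \<in> ?W \<and> u2 \<in> ?W} :: 'k wpoly set"
  have R: "ring ?R" by (rule cring.axioms(1)[OF poly_ring_cring])
  have S: "ring ?S" by (rule cring.axioms(1)[OF poly_ring_cring])
  have fV: "fv ` ?V \<subseteq> ?W" using fv_in_L by blast
  have gW: "gv ` ?W \<subseteq> ?V" using gv_in_V assms by blast
  have h: "pmap fv \<in> ring_hom ?R ?S" by (rule pmap_hom[OF fV])
  have g: "pmap gv \<in> ring_hom ?S ?R" by (rule pmap_hom[OF gW])
  have J: "ideal ?J ?S" by (rule J_ideal)
  have Iid: "ideal ?I ?R" by (rule I_ideal)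
  have Isub: "?I \<subseteq> carrier ?R"
    by (rule additive_subgroup.a_subset[OF ideal.axioms(1)[OF Iid]])
  have GIsub: "?GI \<subseteq> carrier ?R" using gens_sub by simp
  have GJsub: "?GJ \<subseteq> carrier ?S" by (rule hibi_gens_sub)
  have surj: "pmap fv ` carrier ?R = carrier ?S"
  proof
    show "pmap fv ` carrier ?R \<subseteq> carrier ?S" using ring_hom_closed[OF h] by blast
    show "carrier ?S \<subseteq> pmap fv ` carrier ?R"
    proof
      fix q assume q: "q \<in> carrier ?S"
      then have q': "q \<in> polys_in ?W" by simp
      have "pmap fv (pmap gv q) = q"
      proof (rule pmap_inv)
        fix a v assume "a \<in> Poly_Mapping.keys q" "v \<in> Poly_Mapping.keys a"
        then have "v \<in> ?W" using q' unfolding polys_in_iff by blast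
        then show "fv (gv v) = v" by (rule fv_gv)
      qed
      moreover have "pmap gv q \<in> carrier ?R" using pmap_polys_in[OF gW q'] by simp
      ultimately show "q \<in> pmap fv ` carrier ?R" by (metis image_eqI)
    qed
  qed
  have imgI: "pmap fv ` ?GI \<subseteq> ?J"
  proof
    fix y assume "y \<in> pmap fv ` ?GI"
    then obtain x where x: "x \<in> ?GI" "y = pmap fv x" by blast
    from x(1) show "y \<in> ?J"
    proof
      assume "x \<in> minors_H m n r"
      then obtain i i' j j' k k' where xx0: "x = pvar (i,j,k) * pvar (i',j',k') - pvar (i,j',k') * pvar (i',j,k)"
        "i < i'" "i' < m" "j < n" "j' < n" "k < r" "k' < r"
        unfolding minors_H_def by blast
      then have xx: "x = pvar (i,j,k) * pvar (i',j',k') - pvar (i,j',k') * pvar (i',j,k)"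
        "i < m" "i' < m" "j < n" "j' < n" "k < r" "k' < r" by simp_all
      show "y \<in> ?J" unfolding x(2) xx(1)
        by (rule pmap_gen_H) (use xx in \<open>auto simp: gen_vars_def fv_inter fv_union min.commute max.commute\<close>)
    next
      assume "x \<in> minors_V m n r"
      then obtain i i' j j' k k' where xx0: "x = pvar (i,j,k) * pvar (i',j',k') - pvar (i,j',k) * pvar (i',j,k')"
        "i < m" "i' < m" "j < j'" "j' < n" "k < r" "k' < r"
        unfolding minors_V_def by blast
      then have xx: "x = pvar (i,j,k) * pvar (i',j',k') - pvar (i,j',k) * pvar (i',j,k')"
        "i < m" "i' < m" "j < n" "j' < n" "k < r" "k' < r" by simp_all
      show "y \<in> ?J" unfolding x(2) xx(1)
        by (rule pmap_gen_H) (use xx in \<open>auto simp: gen_vars_def fv_inter fv_union min.commute max.commute\<close>)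
    qed
  qed
  have imgJ: "pmap gv ` ?GJ \<subseteq> ?I"
  proof
    fix y assume "y \<in> pmap gv ` ?GJ"
    then obtain u1 u2 where yy: "y = pmap gv (pvar u1 * pvar u2 - pvar (u1 \<inter> u2) * pvar (u1 \<union> u2) :: 'k wpoly)"
      "u1 \<in> ?W" "u2 \<in> ?W" by blast
    show "y \<in> ?I" unfolding yy(1) by (rule pmap_gen_hibi[OF yy(2,3) assms])
  qed
  have ker: "pmap fv p \<in> ?J \<longleftrightarrow> p \<in> ?I" if p: "p \<in> carrier ?R" for p
  proof
    assume "p \<in> ?I"
    then have "p \<in> genideal ?R ?GI" by (simp add: I_mnr_def)
    then show "pmap fv p \<in> ?J" by (rule genideal_image[OF R S h GIsub J imgI])
  next
    assume pJ: "pmap fv p \<in> ?J"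
    have "pmap gv (pmap fv p) = p"
      by (rule pmap_inv) (simp add: gv_fv)
    moreover have "pmap fv p \<in> genideal ?S ?GJ" using pJ by (simp add: hibi_ideal_def)
    then have "pmap gv (pmap fv p) \<in> ?I" by (rule genideal_image[OF S R g GJsub Iid imgJ])
    ultimately show "p \<in> ?I" by simp
  qed
  note Q = quot_iso_gen[OF R S h J surj Isub ker]
  show ?thesis
    unfolding kalg_iso_quot_def
  proof (rule bexI[OF _ Q(1)], rule allI)
    fix c :: 'k
    have "pconst c \<in> carrier ?R" by (simp add: polys_in_pconst)
    then show "the_elem ((\<lambda>p. ?J +>\<^bsub>?S\<^esub> pmap fv p) ` (?I +>\<^bsub>?R\<^esub> pconst c)) = ?J +>\<^bsub>?S\<^esub> pconst c"
      using Q(2) by (simp add: pmap_pconst)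
  qed
qed

end
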